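(* Let $\Psi:[0,T]\times\Omega\to\mathscr K_c(E)$ be an $\mathbb F$-adapted set-valued martingale with $\Psi_T$ $p$-integrably bounded. Then for every $t\in[0,T]$, $$\overline{dec}_{\mathscr F_t}\big(\pi_t(\mathscr M^p_{sel}(\Psi))\big)=S^p_{\mathscr F_t}(\Psi_t),$$ where $\pi_t(\mathscr M^p_{sel}(\Psi))=\{\psi_t:\psi\in\mathscr M^p_{sel}(\Psi)\}$.
   Context: All Banach spaces are real. $E$ is a separable UMD Banach space; $T>0$, $p>1$. $(\Omega,\mathscr F,\mathbb P)$ carries a standard real Brownian motion $W$; $\mathbb F=(\mathscr F_t)$ is the natural filtration of $W$ augmented by null sets, $\mathscr F_T=\mathscr F$. $\mathscr K_c(E)$: nonempty closed convex subsets. Measurability of set-valued maps: $\{G\cap O\ne\emptyset\}$ measurable for open $O$; $S^p_{\mathscr G}(G)=\{g\in L^p(\Omega,\mathscr G;E):g\in G\text{ a.s.}\}$; $p$-integrably bounded: $\sup_{x\in G(\omega)}\|x\|\le v(\omega)$ a.s., $v\in L^p$. $\overline{dec}_{\mathscr F_t}(\Delta)$: smallest closed subset of $L^p(\Omega,\mathscr F_t;E)$ containing $\Delta$ and stable under $\sum_k\mathds 1_{A_k}h_k$ for finite $\mathscr F_t$-measurable partitions $(A_k)$. Set-valued conditional expectation $\mathbb E^{\mathscr G}(G)$: the $\mathscr G$-measurable closed-valued map with $S^p_{\mathscr G}(\mathbb E^{\mathscr G}G)=\mathrm{cl}_{L^p}\{\mathbb E^{\mathscr G}g:g\in S^p_{\mathscr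 F}(G)\}$. $\Psi$ is a set-valued martingale if $\mathbb E^{\mathscr F_s}\Psi_t=\Psi_s$ a.s. for $s\le t$. $\mathscr M^p_{sel}(\Psi)$: the set of $E$-valued $\mathbb F$-martingales $\psi$ with $\psi_t\in S^p_{\mathscr F_t}(\Psi_t)$ for every $t\in[0,T]$. *)

theory Defs
  imports "HOL-Probability.Probability"
begin

text \<open>E is modelled by a type 'e of class banach + second_countable_topology;
for a (real) Banach space second countability is the same as separability.\<close>

definition Lp_norm :: "'a measure \<Rightarrow> real \<Rightarrow> ('a \<Rightarrow> 'e::{banach,second_countable_topology}) \<Rightarrow> real" where
  "Lp_norm M p f = (\<integral>x. norm (f x) powr p \<partial>M) powr (1 / p)"

definition Lp_space :: "'a measure \<Rightarrow> 'a measure \<Rightarrow> real \<Rightarrow> ('a \<Rightarrow> 'e::{banach,second_countable_topology}) set" where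
  "Lp_space M G p = {f. f \<in> borel_measurable G \<and> integrable M (\<lambda>x. norm (f x) powr p)}"

definition Lp_closure :: "'a measure \<Rightarrow> 'a measure \<Rightarrow> real \<Rightarrow> ('a \<Rightarrow> 'e::{banach,second_countable_topology}) set \<Rightarrow> ('a \<Rightarrow> 'e) set" where
  "Lp_closure M G p A = {f \<in> Lp_space M G p. \<forall>e>0. \<exists>g\<in>A. Lp_norm M p (\<lambda>x. f x - g x) < e}"

definition Sp :: "'a measure \<Rightarrow> 'a measure \<Rightarrow> real \<Rightarrow> ('a \<Rightarrow> 'e::{banach,second_countable_topology} set) \<Rightarrow> ('a \<Rightarrow> 'e) set" where
  "Sp M G p X = {f \<in> Lp_space M G p. AE x in M. f x \<in> X x}"

definition setvalued_measurable :: "'a measure \<Rightarrow> ('a \<Rightarrow> 'e::topological_space set) \<Rightarrow> bool" where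
  "setvalued_measurable G X \<longleftrightarrow> (\<forall>U. open U \<longrightarrow> {x \<in> space G. X x \<inter> U \<noteq> {}} \<in> sets G)"

definition Kc_valued :: "'a measure \<Rightarrow> ('a \<Rightarrow> 'e::real_normed_vector set) \<Rightarrow> bool" where
  "Kc_valued M X \<longleftrightarrow> (\<forall>x\<in>space M. X x \<noteq> {} \<and> closed (X x) \<and> convex (X x))"

definition is_cond_exp :: "'a measure \<Rightarrow> 'a measure \<Rightarrow> ('a \<Rightarrow> 'e::{banach,second_countable_topology}) \<Rightarrow> ('a \<Rightarrow> 'e) \<Rightarrow> bool" where
  "is_cond_exp M G f h \<longleftrightarrow> h \<in> borel_measurable G \<and> integrable M h \<and>
     (\<forall>A\<in>sets G. set_lebesgue_integral M A h = set_lebesgue_integral M A f)"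

definition is_set_cond_exp :: "'a measure \<Rightarrow> 'a measure \<Rightarrow> real \<Rightarrow> ('a \<Rightarrow> 'e::{banach,second_countable_topology} set) \<Rightarrow> ('a \<Rightarrow> 'e set) \<Rightarrow> bool" where
  "is_set_cond_exp M G p X Y \<longleftrightarrow> setvalued_measurable G Y \<and> (\<forall>x\<in>space M. closed (Y x)) \<and>
     Sp M G p Y = Lp_closure M G p {h. \<exists>g\<in>Sp M M p X. is_cond_exp M G g h}"

definition set_martingale :: "'a measure \<Rightarrow> (real \<Rightarrow> 'a measure) \<Rightarrow> real \<Rightarrow> real \<Rightarrow> (real \<Rightarrow> 'a \<Rightarrow> 'e::{banach,second_countable_topology} set) \<Rightarrow> bool" where
  "set_martingale M F T p \<Psi> \<longleftrightarrow> (\<forall>s t. 0 \<le> s \<longrightarrow> s \<le> t \<longrightarrow> t \<le> T \<longrightarrow>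
     (\<exists>Y. is_set_cond_exp M (F s) p (\<Psi> t) Y \<and> (AE x in M. Y x = \<Psi> s x)))"

definition martingale_E :: "'a measure \<Rightarrow> (real \<Rightarrow> 'a measure) \<Rightarrow> real \<Rightarrow> (real \<Rightarrow> 'a \<Rightarrow> 'e::{banach,second_countable_topology}) \<Rightarrow> bool" where
  "martingale_E M F T \<psi> \<longleftrightarrow>
     (\<forall>t\<in>{0..T}. \<psi> t \<in> borel_measurable (F t) \<and> integrable M (\<psi> t)) \<and>
     (\<forall>s t. 0 \<le> s \<longrightarrow> s \<le> t \<longrightarrow> t \<le> T \<longrightarrow>
        (\<forall>A\<in>sets (F s). set_lebesgue_integral M A (\<psi> t) = set_lebesgue_integral M A (\<psi> s)))"

definition Msel :: "'a measure \<Rightarrow> (real \<Rightarrow> 'a measure) \<Rightarrow> real \<Rightarrow> real \<Rightarrow> (real \<Rightarrow> 'a \<Rightarrow> 'e::{banach,second_countable_topology} set) \<Rightarrow> (real \<Rightarrow> 'a \<Rightarrow> 'e) set" where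
  "Msel M F T p \<Psi> = {\<psi>. martingale_E M F T \<psi> \<and> (\<forall>t\<in>{0..T}. \<psi> t \<in> Sp M (F t) p (\<Psi> t))}"

definition decomposable :: "'a measure \<Rightarrow> 'a measure \<Rightarrow> ('a \<Rightarrow> 'e::real_vector) set \<Rightarrow> bool" where
  "decomposable M G D \<longleftrightarrow> (\<forall>(n::nat) (A::nat \<Rightarrow> 'a set) h.
     (\<forall>i<n. A i \<in> sets G \<and> h i \<in> D) \<and> disjoint_family_on A {..<n} \<and> (\<Union>i<n. A i) = space M
     \<longrightarrow> (\<lambda>x. \<Sum>i<n. indicator (A i) x *\<^sub>R h i x) \<in> D)"

definition dec_closure :: "'a measure \<Rightarrow> 'a measure \<Rightarrow> real \<Rightarrow> ('a \<Rightarrow> 'e::{banach,second_countable_topology}) set \<Rightarrow> ('a \<Rightarrow> 'e) set" where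
  "dec_closure M G p \<Delta> = \<Inter>{D. \<Delta> \<subseteq> D \<and> D \<subseteq> Lp_space M G p \<and> Lp_closure M G p D \<subseteq> D \<and> decomposable M G D}"

definition brownian_motion :: "'a measure \<Rightarrow> real \<Rightarrow> (real \<Rightarrow> 'a \<Rightarrow> real) \<Rightarrow> bool" where
  "brownian_motion M T W \<longleftrightarrow>
     (\<forall>t\<in>{0..T}. W t \<in> borel_measurable M) \<and>
     (\<forall>x\<in>space M. W 0 x = 0 \<and> continuous_on {0..T} (\<lambda>t. W t x)) \<and>
     (\<forall>s t. 0 \<le> s \<longrightarrow> s < t \<longrightarrow> t \<le> T \<longrightarrow>
        distributed M lborel (\<lambda>x. W t x - W s x) (\<lambda>y. ennreal (normal_density 0 (sqrt (t - s)) y))) \<and>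
     (\<forall>(n::nat) (ts::nat \<Rightarrow> real). 0 \<le> ts 0 \<and> (\<forall>i<n. ts i < ts (Suc i)) \<and> ts n \<le> T \<longrightarrow>
        prob_space.indep_vars M (\<lambda>_. borel) (\<lambda>i x. W (ts (Suc i)) x - W (ts i) x) {..<n})"

definition nat_filtration :: "'a measure \<Rightarrow> (real \<Rightarrow> 'a \<Rightarrow> real) \<Rightarrow> real \<Rightarrow> 'a measure" where
  "nat_filtration M W t = sigma (space M)
     ({W s -` B \<inter> space M | s B. s \<in> {0..t} \<and> B \<in> sets borel} \<union> null_sets M)"

text \<open>By passing to the joint law, it suffices to consider probability measures
  on the sequence space nat => 'e; martingale difference sequences are taken w.r.t. their own
  natural filtration (d_0 arbitrary, E[d_n | d_0..d_{n-1}] = 0 for n >= 1).\<close>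
definition umd :: "'e::{banach,second_countable_topology} itself \<Rightarrow> bool" where
  "umd _ \<longleftrightarrow> (\<exists>p>1. \<exists>\<beta>. \<forall>(P::(nat \<Rightarrow> 'e) measure) (d::nat \<Rightarrow> (nat \<Rightarrow> 'e) \<Rightarrow> 'e) (N::nat) (\<epsilon>::nat \<Rightarrow> real).
     prob_space P \<and>
     (\<forall>n. d n \<in> borel_measurable P \<and> integrable P (\<lambda>x. norm (d n x) powr p)) \<and>
     (\<forall>n\<ge>1. \<forall>A\<in>sets (sigma (space P) {d k -` B \<inter> space P | k B. k < n \<and> B \<in> sets borel}).
         set_lebesgue_integral P A (d n) = 0) \<and>
     (\<forall>n. \<epsilon> n \<in> {-1, 1})
     \<longrightarrow> Lp_norm P p (\<lambda>x. \<Sum>n<N. \<epsilon> n *\<^sub>R d n x) \<le> \<beta> * Lp_norm P p (\<lambda>x. \<Sum>n<N. d n x))"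

end

theory Submission
  imports Defs
begin

lemma ce_unique:
  fixes f h1 h2 :: "'a \<Rightarrow> 'e::{banach,second_countable_topology}"
  assumes P: "prob_space M" and sub: "subalgebra M G" and h1: "is_cond_exp M G f h1" and h2: "is_cond_exp M G f h2"
  shows "AE x in M. h1 x = h2 x"
proof -
  let ?MF = "restr_to_subalg M G"
  have m1[measurable]: "h1 \<in> borel_measurable G" and m2[measurable]: "h2 \<in> borel_measurable G"
    using h1 h2 unfolding is_cond_exp_def by auto
  have i1: "integrable ?MF h1" using h1 unfolding is_cond_exp_def by (auto intro: integrable_in_subalg[OF sub])
  have i2: "integrable ?MF h2" using h2 unfolding is_cond_exp_def by (auto intro: integrable_in_subalg[OF sub])
  interpret MF: prob_space ?MF by (rule prob_space_restr_to_subalg[OF sub P])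
  have "AE x in ?MF. h1 x = h2 x"
  proof (rule MF.density_unique_banach[OF i1 i2])
    fix A assume "A \<in> sets ?MF"
    then have A[measurable]: "A \<in> sets G" using sets_restr_to_subalg[OF sub] by simp
    have "set_lebesgue_integral ?MF A h1 = set_lebesgue_integral M A h1"
      unfolding set_lebesgue_integral_def by (rule integral_subalgebra2[OF sub]) measurable
    also have "\<dots> = set_lebesgue_integral M A h2" using h1 h2 A unfolding is_cond_exp_def by auto
    also have "\<dots> = set_lebesgue_integral ?MF A h2"
      unfolding set_lebesgue_integral_def by (rule integral_subalgebra2[OF sub, symmetric]) measurable
    finally show "set_lebesgue_integral ?MF A h1 = set_lebesgue_integral ?MF A h2" .
  qed
  then show ?thesis by (rule AE_restr_to_subalg[OF sub])
qed

lemma powr_aux: fixes a p :: real assumes "a \<ge> 0" "p \<ge> 1" shows "(a + 1) powr p \<le> 2 powr p * (a powr p + 1)"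
proof -
  have "(a + 1) powr p \<le> (2 * max a 1) powr p" using assms by (intro powr_mono2) auto
  also have "\<dots> = 2 powr p * (max a 1) powr p" using assms by (simp add: powr_mult)
  also have "(max a 1) powr p \<le> a powr p + 1"
    using assms by (cases "a \<le> 1") (auto simp: max_def)
  then have "2 powr p * (max a 1) powr p \<le> 2 powr p * (a powr p + 1)" by simp
  finally show ?thesis .
qed
lemma le_powr_aux: fixes a p :: real assumes "a \<ge> 0" "p \<ge> 1" shows "a \<le> 1 + a powr p"
proof (cases "a \<le> 1")
  case False
  then have "a powr 1 \<le> a powr p" using assms by (intro powr_mono) auto
  then show ?thesis using False by simp
qed (use assms in \<open>auto intro: add_increasing2\<close>)

locale pce = prob_space M for M :: "'a measure" +
  fixes G :: "'a measure"
  assumes subalg: "subalgebra M G" and nulls: "null_sets M \<subseteq> sets G"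

sublocale pce \<subseteq> finite_measure_subalgebra M G
  by unfold_locales (rule subalg)

context pce
begin

definition sce :: "('a \<Rightarrow> 'e::{banach,second_countable_topology}) \<Rightarrow> 'a \<Rightarrow> 'e" where
  "sce s x = (\<Sum>y\<in>s ` space M. real_cond_exp M G (indicator (s -` {y} \<inter> space M)) x *\<^sub>R y)"

lemma sets_G_M: "A \<in> sets G \<Longrightarrow> A \<in> sets M"
  using subalg unfolding subalgebra_def by auto

lemma meas_G_M: "f \<in> borel_measurable G \<Longrightarrow> f \<in> borel_measurable M"
  by (rule measurable_from_subalg[OF subalg])

lemma int_ind[simp, intro]: "A \<in> sets M \<Longrightarrow> integrable M (indicat_real A)"
  by (intro integrable_real_indicator) (auto simp: less_top[symmetric])

lemma int_ind_mult: "A \<in> sets M \<Longrightarrow> integrable M f \<Longrightarrow> integrable M (\<lambda>x. indicat_real A x * (f x::real))"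
  using integrable_mult_indicator[of A M f] by simp

lemma set_int_sum_scaleR:
  fixes c :: "'i \<Rightarrow> 'e::{banach,second_countable_topology}"
  assumes "finite I" "A \<in> sets M" "\<And>i. i \<in> I \<Longrightarrow> integrable M (f i)"
  shows "(\<integral>x. indicator A x *\<^sub>R (\<Sum>i\<in>I. f i x *\<^sub>R c i) \<partial>M) = (\<Sum>i\<in>I. (\<integral>x. indicator A x * f i x \<partial>M) *\<^sub>R c i)"
proof -
  have "(\<integral>x. indicator A x *\<^sub>R (\<Sum>i\<in>I. f i x *\<^sub>R c i) \<partial>M) = (\<integral>x. (\<Sum>i\<in>I. (indicator A x * f i x) *\<^sub>R c i) \<partial>M)"
    by (simp add: scaleR_sum_right)
  also have "\<dots> = (\<Sum>i\<in>I. (\<integral>x. (indicator A x * f i x) *\<^sub>R c i \<partial>M))"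
    by (rule Bochner_Integration.integral_sum) (auto intro!: integrable_scaleR_left int_ind_mult assms)
  also have "\<dots> = (\<Sum>i\<in>I. (\<integral>x. indicator A x * f i x \<partial>M) *\<^sub>R c i)"
    by (rule sum.cong[OF refl], rule integral_scaleR_left) (auto intro!: int_ind_mult assms)
  finally show ?thesis .
qed

lemma sce_meas: "sce s \<in> borel_measurable G"
  unfolding sce_def by measurable

lemma sce_int:
  assumes "simple_function M s"
  shows "integrable M (sce s)"
  unfolding sce_def
proof (rule Bochner_Integration.integrable_sum, rule integrable_scaleR_left)
  fix y assume "y \<in> s ` space M"
  have "s -` {y} \<inter> space M \<in> sets M" using assms by (simp add: simple_functionD(2))
  then show "integrable M (real_cond_exp M G (indicator (s -` {y} \<inter> space M)))"
    by (intro real_cond_exp_int(1)) (rule int_ind)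
qed

lemma sce_ce:
  fixes s :: "'a \<Rightarrow> 'e::{banach,second_countable_topology}"
  assumes sf: "simple_function M s"
  shows "is_cond_exp M G s (sce s)"
  unfolding is_cond_exp_def
proof (intro conjI ballI sce_meas sce_int[OF sf])
  fix A assume AG: "A \<in> sets G"
  then have AM[measurable]: "A \<in> sets M" by (rule sets_G_M)
  have fin: "finite (s ` space M)" using sf by (simp add: simple_functionD(1))
  have B[measurable]: "s -` {y} \<inter> space M \<in> sets M" for y using sf by (simp add: simple_functionD(2))
  have "set_lebesgue_integral M A (sce s) = (\<Sum>y\<in>s ` space M. (\<integral>x. indicator A x * real_cond_exp M G (indicator (s -` {y} \<inter> space M)) x \<partial>M) *\<^sub>R y)"
    unfolding set_lebesgue_integral_def sce_def
    by (rule set_int_sum_scaleR[OF fin AM]) (auto intro: real_cond_exp_int(1))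
  also have "\<dots> = (\<Sum>y\<in>s ` space M. (\<integral>x. indicator A x * indicator (s -` {y} \<inter> space M) x \<partial>M) *\<^sub>R y)"
  proof (rule sum.cong[OF refl])
    fix y
    have "(\<integral>x\<in>A. indicator (s -` {y} \<inter> space M) x \<partial>M) = (\<integral>x\<in>A. real_cond_exp M G (indicator (s -` {y} \<inter> space M)) x \<partial>M)"
      by (rule real_cond_exp_intA[OF _ AG]) simp
    then show "(\<integral>x. indicator A x * real_cond_exp M G (indicator (s -` {y} \<inter> space M)) x \<partial>M) *\<^sub>R y =
        (\<integral>x. indicator A x * indicator (s -` {y} \<inter> space M) x \<partial>M) *\<^sub>R y"
      unfolding set_lebesgue_integral_def by simp
  qed
  also have "\<dots> = (\<integral>x. indicator A x *\<^sub>R (\<Sum>y\<in>s ` space M. indicator (s -` {y} \<inter> space M) x *\<^sub>R y) \<partial>M)"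
    by (rule set_int_sum_scaleR[OF fin AM, symmetric]) auto
  also have "\<dots> = set_lebesgue_integral M A s"
    unfolding set_lebesgue_integral_def
    by (rule Bochner_Integration.integral_cong[OF refl])
       (simp add: simple_function_indicator_representation_banach[OF sf, symmetric])
  finally show "set_lebesgue_integral M A (sce s) = set_lebesgue_integral M A s" .
qed

lemma sce_norm:
  fixes s :: "'a \<Rightarrow> 'e::{banach,second_countable_topology}"
  assumes sf: "simple_function M s"
  shows "AE x in M. norm (sce s x) \<le> real_cond_exp M G (\<lambda>x. norm (s x)) x"
proof -
  let ?S = "s ` space M"
  let ?B = "\<lambda>y. s -` {y} \<inter> space M"
  have fin: "finite ?S" using sf by (simp add: simple_functionD(1))
  have B[measurable]: "?B y \<in> sets M" for y using sf by (simp add: simple_functionD(2))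
  have smeas[measurable]: "s \<in> borel_measurable M" using sf by (rule borel_measurable_simple_function)
  have pos: "AE x in M. \<forall>y\<in>?S. real_cond_exp M G (indicator (?B y)) x \<ge> 0"
    by (rule AE_finite_allI[OF fin], rule real_cond_exp_pos) auto
  have rep: "norm (s x) = (\<Sum>y\<in>?S. norm y * indicator (?B y) x)" if "x \<in> space M" for x
  proof -
    have "(\<Sum>y\<in>?S. norm y * indicator (?B y) x) = (\<Sum>y\<in>?S. if y = s x then norm y else 0)"
      using that by (intro sum.cong) (auto simp: indicator_def)
    also have "\<dots> = norm (s x)" using that fin by simp
    finally show ?thesis by simp
  qed
  have e1: "AE x in M. real_cond_exp M G (\<lambda>x. norm (s x)) x = real_cond_exp M G (\<lambda>x. \<Sum>y\<in>?S. norm y * indicator (?B y) x) x"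
    by (rule real_cond_exp_cong) (auto intro!: AE_I2 rep)
  have e2: "AE x in M. real_cond_exp M G (\<lambda>x. \<Sum>y\<in>?S. norm y * indicator (?B y) x) x = (\<Sum>y\<in>?S. real_cond_exp M G (\<lambda>x. norm y * indicator (?B y) x) x)"
    by (rule real_cond_exp_sum) auto
  have e3: "AE x in M. \<forall>y\<in>?S. real_cond_exp M G (\<lambda>x. norm y * indicator (?B y) x) x = norm y * real_cond_exp M G (indicator (?B y)) x"
    by (rule AE_finite_allI[OF fin], rule real_cond_exp_cmult) auto
  show ?thesis
    using pos e1 e2 e3
  proof eventually_elim
    case (elim x)
    have "norm (sce s x) \<le> (\<Sum>y\<in>?S. norm (real_cond_exp M G (indicator (?B y)) x *\<^sub>R y))"
      unfolding sce_def by (rule norm_sum)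
    also have "\<dots> = (\<Sum>y\<in>?S. norm y * real_cond_exp M G (indicator (?B y)) x)"
      using elim(1) by (intro sum.cong) auto
    also have "\<dots> = real_cond_exp M G (\<lambda>x. norm (s x)) x"
      using elim by simp
    finally show ?case .
  qed
qed

lemma simple_int:
  fixes s :: "'a \<Rightarrow> 'e::{banach,second_countable_topology}"
  assumes "simple_function M s" shows "integrable M s"
  by (rule integrable_simple_function[OF assms]) (auto simp: less_top[symmetric])

lemma ce_diff:
  fixes f1 f2 h1 h2 :: "'a \<Rightarrow> 'e::{banach,second_countable_topology}"
  assumes i1: "integrable M f1" and i2: "integrable M f2"
    and c1: "is_cond_exp M G f1 h1" and c2: "is_cond_exp M G f2 h2"
  shows "is_cond_exp M G (\<lambda>x. f1 x - f2 x) (\<lambda>x. h1 x - h2 x)"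
  unfolding is_cond_exp_def
proof (intro conjI ballI)
  show "(\<lambda>x. h1 x - h2 x) \<in> borel_measurable G" using c1 c2 unfolding is_cond_exp_def by auto
  show "integrable M (\<lambda>x. h1 x - h2 x)" using c1 c2 unfolding is_cond_exp_def by auto
  fix A assume AG: "A \<in> sets G"
  then have AM: "A \<in> sets M" by (rule sets_G_M)
  have j1: "integrable M h1" and j2: "integrable M h2" using c1 c2 unfolding is_cond_exp_def by auto
  have "set_lebesgue_integral M A (\<lambda>x. h1 x - h2 x) = set_lebesgue_integral M A h1 - set_lebesgue_integral M A h2"
    unfolding set_lebesgue_integral_def scaleR_diff_right
    by (rule Bochner_Integration.integral_diff) (auto intro!: integrable_mult_indicator AM j1 j2)
  also have "\<dots> = set_lebesgue_integral M A f1 - set_lebesgue_integral M A f2"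
    using c1 c2 AG unfolding is_cond_exp_def by auto
  also have "\<dots> = set_lebesgue_integral M A (\<lambda>x. f1 x - f2 x)"
    unfolding set_lebesgue_integral_def scaleR_diff_right
    by (rule Bochner_Integration.integral_diff[symmetric]) (auto intro!: integrable_mult_indicator AM i1 i2)
  finally show "set_lebesgue_integral M A (\<lambda>x. h1 x - h2 x) = set_lebesgue_integral M A (\<lambda>x. f1 x - f2 x)" .
qed

lemma sce_diff_norm:
  fixes s1 s2 :: "'a \<Rightarrow> 'e::{banach,second_countable_topology}"
  assumes sf1: "simple_function M s1" and sf2: "simple_function M s2"
  shows "AE x in M. norm (sce s1 x - sce s2 x) \<le> real_cond_exp M G (\<lambda>x. norm (s1 x - s2 x)) x"
proof -
  have sf: "simple_function M (\<lambda>x. s1 x - s2 x)"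
    using simple_function_compose2[where h="(-)", OF sf1 sf2] by simp
  have "is_cond_exp M G (\<lambda>x. s1 x - s2 x) (\<lambda>x. sce s1 x - sce s2 x)"
    by (rule ce_diff[OF simple_int[OF sf1] simple_int[OF sf2] sce_ce[OF sf1] sce_ce[OF sf2]])
  from ce_unique[OF prob_space_axioms subalg this sce_ce[OF sf]]
  have "AE x in M. sce s1 x - sce s2 x = sce (\<lambda>x. s1 x - s2 x) x" .
  with sce_norm[OF sf] show ?thesis by eventually_elim simp
qed

lemma ce_exists:
  fixes g :: "'a \<Rightarrow> 'e::{banach,second_countable_topology}"
  assumes ig: "integrable M g"
  shows "\<exists>C. is_cond_exp M G g C \<and> (AE x in M. norm (C x) \<le> 2 * real_cond_exp M G (\<lambda>x. norm (g x)) x)"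
proof -
  have gm[measurable]: "g \<in> borel_measurable M" using ig by auto
  obtain s where sf: "\<And>i. simple_function M (s i)"
    and slim: "\<And>x. x \<in> space M \<Longrightarrow> (\<lambda>i. s i x) \<longlonglongrightarrow> g x"
    and sb: "\<And>x i. x \<in> space M \<Longrightarrow> norm (s i x) \<le> 2 * norm (g x)"
  proof -
    from borel_measurable_implies_sequence_metric[OF gm, of 0] obtain F where
      "\<forall>i. simple_function M (F i)" "\<forall>x\<in>space M. (\<lambda>i. F i x) \<longlonglongrightarrow> g x"
      "\<forall>i. \<forall>x\<in>space M. dist (F i x) 0 \<le> 2 * dist (g x) 0" by blast
    then show ?thesis using that[of F] by (simp add: dist_norm)
  qed
  have si: "integrable M (s i)" for i by (rule simple_int[OF sf])
  have sm[measurable]: "s i \<in> borel_measurable M" for i using si by auto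
  define h where "h i = sce (s i)" for i
  have hce: "is_cond_exp M G (s i) (h i)" for i unfolding h_def by (rule sce_ce[OF sf])
  have hi: "integrable M (h i)" for i using hce unfolding is_cond_exp_def by auto
  have hG[measurable]: "h i \<in> borel_measurable G" for i using hce unfolding is_cond_exp_def by auto
  have hM[measurable]: "h i \<in> borel_measurable M" for i using hG by (rule meas_G_M)
  let ?ng = "\<lambda>x. norm (g x)"
  have ing: "integrable M ?ng" using ig by auto
  have L1: "(\<lambda>i. \<integral>x. norm (s i x - g x) \<partial>M) \<longlonglongrightarrow> 0"
  proof -
    have "(\<lambda>i. \<integral>x. norm (s i x - g x) \<partial>M) \<longlonglongrightarrow> (\<integral>x. 0 \<partial>M)"
    proof (rule integral_dominated_convergence[where w="\<lambda>x. 3 * norm (g x)"])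
      show "integrable M (\<lambda>x. 3 * norm (g x))" using ing by auto
      show "AE x in M. (\<lambda>i. norm (s i x - g x)) \<longlonglongrightarrow> 0"
      proof (rule AE_I2)
        fix x assume "x \<in> space M"
        then have "(\<lambda>i. s i x - g x) \<longlonglongrightarrow> 0" using slim[of x] by (simp add: LIM_zero)
        then show "(\<lambda>i. norm (s i x - g x)) \<longlonglongrightarrow> 0" by (rule tendsto_norm_zero)
      qed
      fix i show "AE x in M. norm (norm (s i x - g x)) \<le> 3 * norm (g x)"
      proof (rule AE_I2)
        fix x assume x: "x \<in> space M"
        have "norm (s i x - g x) \<le> norm (s i x) + norm (g x)" by (rule norm_triangle_ineq4)
        then show "norm (norm (s i x - g x)) \<le> 3 * norm (g x)" using sb[OF x, of i] by simp
      qed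
    qed measurable
    then show ?thesis by simp
  qed
  have cau: "\<exists>N. \<forall>i\<ge>N. \<forall>j\<ge>N. (\<integral>x. norm (h i x - h j x) \<partial>M) < e" if e: "e > 0" for e
  proof -
    obtain N where N: "\<And>i. i \<ge> N \<Longrightarrow> \<bar>(\<integral>x. norm (s i x - g x) \<partial>M)\<bar> < e / 2"
      using L1[unfolded LIMSEQ_def, rule_format, of "e/2"] e by auto
    show ?thesis
    proof (intro exI allI impI)
      fix i j assume ij: "N \<le> i" "N \<le> j"
      have "(\<integral>x. norm (h i x - h j x) \<partial>M) \<le> (\<integral>x. real_cond_exp M G (\<lambda>x. norm (s i x - s j x)) x \<partial>M)"
      proof (rule integral_mono_AE)
        show "integrable M (\<lambda>x. norm (h i x - h j x))" using hi by auto
        show "integrable M (real_cond_exp M G (\<lambda>x. norm (s i x - s j x)))"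
          by (rule real_cond_exp_int(1)) (use si in auto)
        show "AE x in M. norm (h i x - h j x) \<le> real_cond_exp M G (\<lambda>x. norm (s i x - s j x)) x"
          unfolding h_def by (rule sce_diff_norm[OF sf sf])
      qed
      also have "\<dots> = (\<integral>x. norm (s i x - s j x) \<partial>M)"
        by (rule real_cond_exp_int(2)) (use si in auto)
      also have "\<dots> \<le> (\<integral>x. norm (s i x - g x) + norm (s j x - g x) \<partial>M)"
      proof (rule integral_mono)
        show "integrable M (\<lambda>x. norm (s i x - s j x))" using si by auto
        show "integrable M (\<lambda>x. norm (s i x - g x) + norm (s j x - g x))" using si ig by auto
        fix x
        have "s i x - s j x = (s i x - g x) - (s j x - g x)" by simp
        then show "norm (s i x - s j x) \<le> norm (s i x - g x) + norm (s j x - g x)"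
          by (metis norm_triangle_ineq4)
      qed
      also have "\<dots> = (\<integral>x. norm (s i x - g x) \<partial>M) + (\<integral>x. norm (s j x - g x) \<partial>M)"
        by (rule Bochner_Integration.integral_add) (use si ig in auto)
      also have "\<dots> < e" using N[OF ij(1)] N[OF ij(2)] by linarith
      finally show "(\<integral>x. norm (h i x - h j x) \<partial>M) < e" .
    qed
  qed
  obtain r where r: "strict_mono r" and rc: "AE x in M. Cauchy (\<lambda>i. h (r i) x)"
    using cauchy_L1_AE_cauchy_subseq[OF hi cau] by blast
  let ?w = "\<lambda>x. 2 * real_cond_exp M G ?ng x"
  have iw: "integrable M ?w" using real_cond_exp_int(1)[OF ing] by auto
  have hb: "AE x in M. \<forall>i. norm (h i x) \<le> ?w x"
  proof (rule AE_all_countable[THEN iffD2], intro allI)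
    fix i
    have a1: "AE x in M. real_cond_exp M G (\<lambda>x. norm (s i x)) x \<le> real_cond_exp M G (\<lambda>x. 2 * norm (g x)) x"
      by (rule real_cond_exp_mono) (use sb si ing in \<open>auto intro!: AE_I2\<close>)
    have a2: "AE x in M. real_cond_exp M G (\<lambda>x. 2 * norm (g x)) x = 2 * real_cond_exp M G ?ng x"
      by (rule real_cond_exp_cmult[OF ing])
    show "AE x in M. norm (h i x) \<le> ?w x"
      using sce_norm[OF sf, of i] a1 a2 unfolding h_def by eventually_elim simp
  qed
  from rc hb have "AE x in M. Cauchy (\<lambda>i. h (r i) x) \<and> (\<forall>i. norm (h i x) \<le> ?w x)" by eventually_elim simp
  then have "\<exists>N\<in>null_sets M. {x \<in> space M. \<not> (Cauchy (\<lambda>i. h (r i) x) \<and> (\<forall>i. norm (h i x) \<le> ?w x))} \<subseteq> N"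
    by (simp only: eventually_ae_filter)
  then obtain N where N: "N \<in> null_sets M" and Nsub: "{x \<in> space M. \<not> (Cauchy (\<lambda>i. h (r i) x) \<and> (\<forall>i. norm (h i x) \<le> ?w x))} \<subseteq> N"
    by blast
  have NG: "N \<in> sets G" using N nulls by auto
  have spG: "space G = space M" using subalg unfolding subalgebra_def by auto
  have NcG[measurable]: "space M - N \<in> sets G" using NG spG by (metis sets.compl_sets)
  define hh where "hh i x = indicator (space M - N) x *\<^sub>R h (r i) x" for i x
  define C where "C x = lim (\<lambda>i. hh i x)" for x
  have hhG[measurable]: "hh i \<in> borel_measurable G" for i unfolding hh_def by measurable
  have hh_lim: "(\<lambda>i. hh i x) \<longlonglongrightarrow> C x" if "x \<in> space M" for x
  proof (cases "x \<in> N")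
    case True
    then show ?thesis unfolding C_def hh_def by (simp add: limI)
  next
    case False
    with Nsub that have "Cauchy (\<lambda>i. h (r i) x)" by auto
    then have "convergent (\<lambda>i. h (r i) x)" by (simp add: Cauchy_convergent_iff)
    moreover have "hh i x = h (r i) x" for i using False that unfolding hh_def by simp
    ultimately show ?thesis unfolding C_def by (simp add: convergent_LIMSEQ_iff)
  qed
  have CG[measurable]: "C \<in> borel_measurable G"
    by (rule borel_measurable_LIMSEQ_metric[where f=hh, OF hhG]) (simp add: hh_lim spG)
  have CM[measurable]: "C \<in> borel_measurable M" using CG by (rule meas_G_M)
  have hhM[measurable]: "hh i \<in> borel_measurable M" for i using hhG by (rule meas_G_M)
  have hhb': "norm (hh i x) \<le> ?w x" if "x \<in> space M" "x \<notin> N" for i x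
    using Nsub that unfolding hh_def by auto
  have wpos: "0 \<le> ?w x" if "x \<in> space M" "x \<notin> N" for x
    using order_trans[OF norm_ge_zero hhb'[OF that, of 0]] .
  have hhb: "AE x in M. norm (hh i x) \<le> ?w x" for i
    using AE_not_in[OF N] AE_space by eventually_elim (use hhb' in auto)
  have hh_ae: "AE x in M. hh i x = h (r i) x" for i
    using AE_not_in[OF N] AE_space by eventually_elim (auto simp: hh_def)
  have iC: "integrable M C"
  proof (rule integrable_dominated_convergence[where s=hh and w="?w"])
    show "AE x in M. (\<lambda>i. hh i x) \<longlonglongrightarrow> C x" by (rule AE_I2) (rule hh_lim)
  qed (use hhb iw in auto)
  have Cb: "AE x in M. norm (C x) \<le> ?w x"
    using AE_space AE_not_in[OF N]
  proof eventually_elim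
    case (elim x)
    show "norm (C x) \<le> ?w x"
      by (rule LIMSEQ_le_const2[OF tendsto_norm[OF hh_lim[OF elim(1)]]]) (use hhb'[OF elim] in auto)
  qed
  have ceq: "set_lebesgue_integral M A C = set_lebesgue_integral M A g" if AG: "A \<in> sets G" for A
  proof -
    have AM[measurable]: "A \<in> sets M" using AG by (rule sets_G_M)
    have t1: "(\<lambda>i. \<integral>x. indicator A x *\<^sub>R hh i x \<partial>M) \<longlonglongrightarrow> (\<integral>x. indicator A x *\<^sub>R C x \<partial>M)"
    proof (rule integral_dominated_convergence[where w="?w"])
      show "AE x in M. (\<lambda>i. indicator A x *\<^sub>R hh i x) \<longlonglongrightarrow> indicator A x *\<^sub>R C x"
        by (rule AE_I2) (auto intro!: tendsto_scaleR hh_lim)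
      fix i show "AE x in M. norm (indicator A x *\<^sub>R hh i x) \<le> ?w x"
        using AE_not_in[OF N] AE_space by eventually_elim (use hhb' wpos in \<open>auto simp: indicator_def\<close>)
    qed (use iw in measurable)
    have e1: "(\<integral>x. indicator A x *\<^sub>R hh i x \<partial>M) = (\<integral>x. indicator A x *\<^sub>R s (r i) x \<partial>M)" for i
    proof -
      have "(\<integral>x. indicator A x *\<^sub>R hh i x \<partial>M) = (\<integral>x. indicator A x *\<^sub>R h (r i) x \<partial>M)"
        by (rule integral_cong_AE) (use hh_ae[of i] in \<open>auto elim: eventually_mono\<close>)
      also have "\<dots> = (\<integral>x. indicator A x *\<^sub>R s (r i) x \<partial>M)"
        using hce[of "r i"] AG unfolding is_cond_exp_def set_lebesgue_integral_def by auto
      finally show ?thesis .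
    qed
    have t2: "(\<lambda>i. \<integral>x. indicator A x *\<^sub>R s i x \<partial>M) \<longlonglongrightarrow> (\<integral>x. indicator A x *\<^sub>R g x \<partial>M)"
    proof (rule integral_dominated_convergence[where w="\<lambda>x. 2 * norm (g x)"])
      show "AE x in M. (\<lambda>i. indicator A x *\<^sub>R s i x) \<longlonglongrightarrow> indicator A x *\<^sub>R g x"
        by (rule AE_I2) (auto intro!: tendsto_scaleR slim)
      fix i show "AE x in M. norm (indicator A x *\<^sub>R s i x) \<le> 2 * norm (g x)"
        by (rule AE_I2) (auto simp: indicator_def intro: sb)
    qed (use ing in auto)
    have t3: "(\<lambda>i. \<integral>x. indicator A x *\<^sub>R hh i x \<partial>M) \<longlonglongrightarrow> (\<integral>x. indicator A x *\<^sub>R g x \<partial>M)"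
      unfolding e1 using LIMSEQ_subseq_LIMSEQ[OF t2 r] by (simp add: comp_def)
    show ?thesis unfolding set_lebesgue_integral_def using LIMSEQ_unique[OF t1 t3] .
  qed
  show ?thesis
    by (rule exI[of _ C]) (auto simp: is_cond_exp_def iC Cb ceq)
qed

lemma Lp_integrable:
  fixes g :: "'a \<Rightarrow> 'e::{banach,second_countable_topology}"
  assumes p: "p \<ge> 1" and gm: "g \<in> borel_measurable M" and gp: "integrable M (\<lambda>x. norm (g x) powr p)"
  shows "integrable M g"
proof (rule Bochner_Integration.integrable_bound[where f="\<lambda>x. 1 + norm (g x) powr p"])
  show "integrable M (\<lambda>x. 1 + norm (g x) powr p)" using gp by auto
  show "AE x in M. norm (g x) \<le> norm (1 + norm (g x) powr p)"
    by (rule AE_I2) (use le_powr_aux[OF norm_ge_zero p] in auto)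
qed (use gm in auto)

lemma ce_Lp:
  fixes g h :: "'a \<Rightarrow> 'e::{banach,second_countable_topology}"
  assumes p: "p \<ge> 1" and gm[measurable]: "g \<in> borel_measurable M" and gp: "integrable M (\<lambda>x. norm (g x) powr p)"
    and ce: "is_cond_exp M G g h"
  shows "integrable M (\<lambda>x. norm (h x) powr p)"
proof -
  have ig: "integrable M g" by (rule Lp_integrable[OF p gm gp])
  obtain C where C: "is_cond_exp M G g C" and Cb: "AE x in M. norm (C x) \<le> 2 * real_cond_exp M G (\<lambda>x. norm (g x)) x"
    using ce_exists[OF ig] by blast
  have hC: "AE x in M. h x = C x" by (rule ce_unique[OF prob_space_axioms subalg ce C])
  have hG: "h \<in> borel_measurable G" using ce unfolding is_cond_exp_def by auto
  have hM[measurable]: "h \<in> borel_measurable M" using hG by (rule meas_G_M)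
  define X where "X x = norm (g x) + 1" for x
  have Xm[measurable]: "X \<in> borel_measurable M" unfolding X_def by measurable
  have iX: "integrable M X" unfolding X_def using ig by auto
  have qX: "integrable M (\<lambda>x. X x powr p)"
  proof (rule Bochner_Integration.integrable_bound[where f="\<lambda>x. 2 powr p * (norm (g x) powr p + 1)"])
    show "integrable M (\<lambda>x. 2 powr p * (norm (g x) powr p + 1))" using gp by auto
    show "AE x in M. norm (X x powr p) \<le> norm (2 powr p * (norm (g x) powr p + 1))"
      by (rule AE_I2) (use powr_aux[OF norm_ge_zero p] in \<open>auto simp: X_def\<close>)
  qed measurable
  have cvx: "convex_on {0<..} (\<lambda>y::real. y powr p)" by (rule powr_convex[OF p])
  have iq: "integrable M (\<lambda>x. real_cond_exp M G X x powr p)"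
    by (rule integrable_convex_cond_exp[where I="{0<..}" and a=0 and q="\<lambda>y. y powr p", OF iX _ _ qX cvx])
       (auto simp: X_def add_nonneg_pos)
  have eX: "AE x in M. real_cond_exp M G X x = real_cond_exp M G (\<lambda>x. norm (g x)) x + real_cond_exp M G (\<lambda>x. 1) x"
    unfolding X_def by (rule real_cond_exp_add) (use ig in auto)
  have e1: "AE x in M. real_cond_exp M G (\<lambda>x. 1) x = 1"
    by (rule real_cond_exp_F_meas) auto
  have pos: "AE x in M. real_cond_exp M G (\<lambda>x. norm (g x)) x \<ge> 0"
    by (rule real_cond_exp_pos) auto
  show ?thesis
  proof (rule Bochner_Integration.integrable_bound[where f="\<lambda>x. 2 powr p * real_cond_exp M G X x powr p"])
    show "integrable M (\<lambda>x. 2 powr p * real_cond_exp M G X x powr p)" using iq by auto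
    show "AE x in M. norm (norm (h x) powr p) \<le> norm (2 powr p * real_cond_exp M G X x powr p)"
      using hC Cb eX e1 pos
    proof eventually_elim
      case (elim x)
      have "norm (h x) \<le> 2 * real_cond_exp M G X x" using elim by simp
      then have "norm (h x) powr p \<le> (2 * real_cond_exp M G X x) powr p"
        by (intro powr_mono2) (use p in auto)
      also have "\<dots> = 2 powr p * real_cond_exp M G X x powr p"
        using elim by (subst powr_mult) auto
      finally show ?case using elim by simp
    qed
  qed measurable
qed

end


lemma nf_gen_Pow: "{W s -` B \<inter> space M | s B. s \<in> {0..t} \<and> B \<in> sets borel} \<union> null_sets M \<subseteq> Pow (space M)"
  using sets.sets_into_space by auto

lemma nf_space: "space (nat_filtration M W t) = space M"
  unfolding nat_filtration_def by (rule space_measure_of_conv)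

lemma nf_mono:
  assumes st: "s \<le> t" shows "sets (nat_filtration M W s) \<subseteq> sets (nat_filtration M W t)"
  unfolding nat_filtration_def
proof (rule measure_of_subset[OF nf_gen_Pow], rule Un_mono[OF _ subset_refl], rule subsetI)
  fix X assume "X \<in> {W r -` B \<inter> space M | r B. r \<in> {0..s} \<and> B \<in> sets borel}"
  then obtain r B where "X = W r -` B \<inter> space M" "r \<in> {0..s}" "B \<in> sets borel" by blast
  then show "X \<in> {W r -` B \<inter> space M | r B. r \<in> {0..t} \<and> B \<in> sets borel}"
    using st by (intro CollectI exI[of _ r] exI[of _ B]) auto
qed

lemma nf_nulls: "null_sets M \<subseteq> sets (nat_filtration M W t)"
  unfolding nat_filtration_def sets_measure_of[OF nf_gen_Pow] by auto

lemma nf_pce: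
  assumes "prob_space M" "sets M = sets (nat_filtration M W T)" "t \<le> T"
  shows "pce M (nat_filtration M W t)"
proof -
  interpret prob_space M by (rule assms(1))
  show ?thesis
  proof unfold_locales
    show "subalgebra M (nat_filtration M W t)"
      unfolding subalgebra_def using nf_space[of M W t] nf_mono[OF assms(3), of M W] assms(2) by auto
  qed (rule nf_nulls)
qed

lemma Lp_diff_int:
  fixes f g :: "'a \<Rightarrow> 'e::{banach,second_countable_topology}"
  assumes sub: "subalgebra M G" and p: "p > 0" and f: "f \<in> Lp_space M G p" and g: "g \<in> Lp_space M G p"
  shows "integrable M (\<lambda>x. norm (f x - g x) powr p)"
proof -
  have fm[measurable]: "f \<in> borel_measurable M" and gm[measurable]: "g \<in> borel_measurable M"
    using f g measurable_from_subalg[OF sub] unfolding Lp_space_def by auto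
  have fi: "integrable M (\<lambda>x. norm (f x) powr p)" and gi: "integrable M (\<lambda>x. norm (g x) powr p)"
    using f g unfolding Lp_space_def by auto
  show ?thesis
  proof (rule Bochner_Integration.integrable_bound[where f="\<lambda>x. 2 powr p * (norm (f x) powr p + norm (g x) powr p)"])
    show "integrable M (\<lambda>x. 2 powr p * (norm (f x) powr p + norm (g x) powr p))" using fi gi by auto
    show "AE x in M. norm (norm (f x - g x) powr p) \<le> norm (2 powr p * (norm (f x) powr p + norm (g x) powr p))"
    proof (rule AE_I2)
      fix x
      have "norm (f x - g x) \<le> 2 * max (norm (f x)) (norm (g x))"
        using norm_triangle_ineq4[of "f x" "g x"] by linarith
      then have "norm (f x - g x) powr p \<le> (2 * max (norm (f x)) (norm (g x))) powr p"
        by (intro powr_mono2) (use p in auto)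
      also have "\<dots> = 2 powr p * max (norm (f x)) (norm (g x)) powr p" by (simp add: powr_mult)
      also have "max (norm (f x)) (norm (g x)) powr p \<le> norm (f x) powr p + norm (g x) powr p"
        by (auto simp: max_def)
      then have "2 powr p * max (norm (f x)) (norm (g x)) powr p \<le> 2 powr p * (norm (f x) powr p + norm (g x) powr p)"
        by simp
      finally show "norm (norm (f x - g x) powr p) \<le> norm (2 powr p * (norm (f x) powr p + norm (g x) powr p))"
        by simp
    qed
  qed measurable
qed

lemma AE_summable:
  fixes r :: "nat \<Rightarrow> 'a \<Rightarrow> real"
  assumes ir: "\<And>n. integrable M (r n)" and nn: "\<And>n x. 0 \<le> r n x"
    and sm: "summable (\<lambda>n. \<integral>x. r n x \<partial>M)"
  shows "AE x in M. summable (\<lambda>n. r n x)"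
proof -
  have rm[measurable]: "r n \<in> borel_measurable M" for n using ir by auto
  have "(\<integral>\<^sup>+x. (\<Sum>n. ennreal (r n x)) \<partial>M) = (\<Sum>n. \<integral>\<^sup>+x. ennreal (r n x) \<partial>M)"
    by (rule nn_integral_suminf) measurable
  also have "\<dots> = (\<Sum>n. ennreal (\<integral>x. r n x \<partial>M))"
    by (intro suminf_cong nn_integral_eq_integral) (auto intro: ir nn)
  also have "\<dots> = ennreal (\<Sum>n. \<integral>x. r n x \<partial>M)"
    by (rule suminf_ennreal2[OF _ sm]) (auto intro: integral_nonneg_AE nn)
  finally have "(\<integral>\<^sup>+x. (\<Sum>n. ennreal (r n x)) \<partial>M) < \<infinity>" by simp
  then have "AE x in M. (\<Sum>n. ennreal (r n x)) < \<infinity>"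
    by (intro finite_nn_integral_imp_ae_finite) measurable
  then show ?thesis
    by eventually_elim (rule summable_suminf_not_top, auto intro: nn)
qed

lemma Lp_norm_self: "p > 0 \<Longrightarrow> Lp_norm M p (\<lambda>x. f x - f x) = 0"
  unfolding Lp_norm_def by simp

lemma Sp_closed:
  fixes X :: "'a \<Rightarrow> 'e::{banach,second_countable_topology} set"
  assumes sub: "subalgebra M G" and p1: "p \<ge> 1" and cl: "\<forall>x\<in>space M. closed (X x)"
  shows "Lp_closure M G p (Sp M G p X) \<subseteq> Sp M G p X"
proof
  have p: "p > 0" using p1 by simp
  fix f assume f: "f \<in> Lp_closure M G p (Sp M G p X)"
  then have fL: "f \<in> Lp_space M G p" unfolding Lp_closure_def by auto
  have "\<forall>n. \<exists>g. g \<in> Sp M G p X \<and> Lp_norm M p (\<lambda>x. f x - g x) < (1/2)^n"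
  proof
    fix n :: nat
    have "(0::real) < (1/2)^n" by simp
    then show "\<exists>g. g \<in> Sp M G p X \<and> Lp_norm M p (\<lambda>x. f x - g x) < (1/2)^n"
      using f unfolding Lp_closure_def by blast
  qed
  then obtain g where g: "\<And>n. g n \<in> Sp M G p X" and gn: "\<And>n. Lp_norm M p (\<lambda>x. f x - g n x) < (1/2)^n"
    by metis
  have gL: "g n \<in> Lp_space M G p" for n using g unfolding Sp_def by auto
  define I where "I n = (\<integral>x. norm (f x - g n x) powr p \<partial>M)" for n
  have iI: "integrable M (\<lambda>x. norm (f x - g n x) powr p)" for n by (rule Lp_diff_int[OF sub p fL gL])
  have I0: "I n \<ge> 0" for n unfolding I_def by (rule integral_nonneg_AE) auto
  have Ib: "I n \<le> (1/2)^n" for n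
  proof -
    have "I n = (I n powr (1/p)) powr p" using I0[of n] p by (simp add: powr_powr)
    also have "\<dots> < ((1/2)^n) powr p"
      using gn[of n] p unfolding Lp_norm_def I_def[symmetric] by (intro powr_less_mono2) auto
    also have "\<dots> \<le> ((1/2::real)^n) powr 1"
      using p1 by (intro powr_mono') (auto simp: power_le_one)
    finally show ?thesis by simp
  qed
  have sI: "summable I"
    by (rule summable_comparison_test'[where g="\<lambda>n. (1/2)^n"]) (use I0 Ib in \<open>auto simp: summable_geometric\<close>)
  have "AE x in M. summable (\<lambda>n. norm (f x - g n x) powr p)"
    by (rule AE_summable[OF iI]) (use sI in \<open>auto simp: I_def[abs_def]\<close>)
  moreover have "AE x in M. \<forall>n. g n x \<in> X x"
    using g unfolding Sp_def by (auto simp: AE_all_countable)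
  ultimately have "AE x in M. f x \<in> X x"
    using AE_space
  proof eventually_elim
    case (elim x)
    have "(\<lambda>n. norm (f x - g n x) powr p) \<longlonglongrightarrow> 0" by (rule summable_LIMSEQ_zero[OF elim(1)])
    then have "(\<lambda>n. (norm (f x - g n x) powr p) powr (1/p)) \<longlonglongrightarrow> 0"
      by (rule tendsto_zero_powrI[where b="1/p"]) (use p in auto)
    then have "(\<lambda>n. norm (f x - g n x)) \<longlonglongrightarrow> 0" using p by (simp add: powr_powr)
    then have "(\<lambda>n. norm (g n x - f x)) \<longlonglongrightarrow> 0" by (simp add: norm_minus_commute)
    then have "(\<lambda>n. g n x) \<longlonglongrightarrow> f x"
      by (simp add: tendsto_norm_zero_iff LIM_zero_iff)
    then show "f x \<in> X x"
      using cl elim(2,3) by (metis closed_sequentially)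
  qed
  then show "f \<in> Sp M G p X" using fL unfolding Sp_def by auto
qed

lemma Sp_decomp:
  fixes X :: "'a \<Rightarrow> 'e::{banach,second_countable_topology} set"
  assumes sub: "subalgebra M G" and p: "p > 0"
  shows "decomposable M G (Sp M G p X)"
  unfolding decomposable_def
proof (intro allI impI, elim conjE)
  fix n :: nat and A :: "nat \<Rightarrow> 'a set" and h
  assume Ah: "\<forall>i<n. A i \<in> sets G \<and> h i \<in> Sp M G p X"
    and disj: "disjoint_family_on A {..<n}" and cov: "(\<Union>i<n. A i) = space M"
  define F where "F x = (\<Sum>i<n. indicator (A i) x *\<^sub>R h i x)" for x
  have AG[measurable]: "i < n \<Longrightarrow> A i \<in> sets G" for i using Ah by auto
  have hG: "i < n \<Longrightarrow> h i \<in> borel_measurable G" for i using Ah unfolding Sp_def Lp_space_def by auto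
  have hM: "i < n \<Longrightarrow> h i \<in> borel_measurable M" for i using hG measurable_from_subalg[OF sub] by auto
  have hp: "i < n \<Longrightarrow> integrable M (\<lambda>x. norm (h i x) powr p)" for i using Ah unfolding Sp_def Lp_space_def by auto
  have Fx: "F x = h j x" if "j < n" "x \<in> A j" for x j
  proof -
    have "F x = (\<Sum>i\<in>{..<n}. if i = j then h i x else 0)"
      unfolding F_def
    proof (rule sum.cong[OF refl])
      fix i assume i: "i \<in> {..<n}"
      show "indicator (A i) x *\<^sub>R h i x = (if i = j then h i x else 0)"
      proof (cases "i = j")
        case False
        then have "x \<notin> A i" using disj i that unfolding disjoint_family_on_def by auto
        then show ?thesis using False by simp
      qed (use that in simp)
    qed
    also have "\<dots> = h j x" using that by simp
    finally show ?thesis .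
  qed
  have ex: "\<exists>j<n. x \<in> A j" if "x \<in> space M" for x using cov that by auto
  have FG: "F \<in> borel_measurable G"
    unfolding F_def
    by (intro borel_measurable_sum borel_measurable_scaleR borel_measurable_indicator) (auto intro: hG)
  have FM[measurable]: "F \<in> borel_measurable M" using FG measurable_from_subalg[OF sub] by auto
  have Fp: "integrable M (\<lambda>x. norm (F x) powr p)"
  proof (rule Bochner_Integration.integrable_bound[where f="\<lambda>x. \<Sum>i<n. norm (h i x) powr p"])
    show "integrable M (\<lambda>x. \<Sum>i<n. norm (h i x) powr p)" using hp by auto
    show "AE x in M. norm (norm (F x) powr p) \<le> norm (\<Sum>i<n. norm (h i x) powr p)"
    proof (rule AE_I2)
      fix x assume "x \<in> space M"
      then obtain j where j: "j < n" "x \<in> A j" using ex by blast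
      have "norm (F x) powr p = norm (h j x) powr p" using Fx[OF j] by simp
      also have "\<dots> \<le> (\<Sum>i<n. norm (h i x) powr p)"
        using j by (intro member_le_sum) auto
      finally show "norm (norm (F x) powr p) \<le> norm (\<Sum>i<n. norm (h i x) powr p)"
        by (simp add: sum_nonneg)
    qed
  qed measurable
  have "AE x in M. \<forall>i\<in>{..<n}. h i x \<in> X x"
    by (rule AE_finite_allI) (use Ah in \<open>auto simp: Sp_def\<close>)
  then have "AE x in M. F x \<in> X x"
    using AE_space
  proof eventually_elim
    case (elim x)
    then obtain j where j: "j < n" "x \<in> A j" using ex by blast
    then show ?case using Fx[OF j] elim(1) by auto
  qed
  then show "(\<lambda>x. \<Sum>i<n. indicator (A i) x *\<^sub>R h i x) \<in> Sp M G p X"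
    using FG Fp unfolding Sp_def Lp_space_def F_def by auto
qed


theorem lemma5p2:
  fixes M :: "'a measure" and W :: "real \<Rightarrow> 'a \<Rightarrow> real" and T p :: real
    and \<Psi> :: "real \<Rightarrow> 'a \<Rightarrow> 'e::{banach,second_countable_topology} set"
  assumes "prob_space M"
    and "umd TYPE('e)"
    and "T > 0" and "p > 1"
    and "brownian_motion M T W"
    and "sets M = sets (nat_filtration M W T)"
    and "\<forall>t\<in>{0..T}. Kc_valued M (\<Psi> t)"
    and "\<forall>t\<in>{0..T}. setvalued_measurable (nat_filtration M W t) (\<Psi> t)"
    and "set_martingale M (nat_filtration M W) T p \<Psi>"
    and "\<exists>v. v \<in> borel_measurable M \<and> integrable M (\<lambda>x. \<bar>v x\<bar> powr p) \<and>
           (AE x in M. \<forall>y\<in>\<Psi> T x. norm y \<le> v x)"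
  shows "\<forall>t\<in>{0..T}. dec_closure M (nat_filtration M W t) p
             {\<psi> t | \<psi>. \<psi> \<in> Msel M (nat_filtration M W) T p \<Psi>}
           = Sp M (nat_filtration M W t) p (\<Psi> t)"
proof
  fix t assume t: "t \<in> {0..T}"
  note P = assms(1) and sM = assms(6) and Kc = assms(7) and mart = assms(9)
  have p1: "p \<ge> 1" and p0: "p > 0" using assms(4) by auto
  define F where "F = nat_filtration M W"
  have pceF: "pce M (F u)" if "u \<in> {0..T}" for u
    unfolding F_def by (rule nf_pce[OF P sM]) (use that in auto)
  have subF: "subalgebra M (F u)" if "u \<in> {0..T}" for u
    using pceF[OF that] unfolding pce_def pce_axioms_def by auto
  have Fmono: "sets (F s) \<subseteq> sets (F u)" if "s \<le> u" for s u
    unfolding F_def by (rule nf_mono[OF that])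
  have closedPsi: "\<forall>x\<in>space M. closed (\<Psi> u x)" if "u \<in> {0..T}" for u
    using Kc that unfolding Kc_valued_def by auto
  obtain Y where Y: "\<And>u. u \<in> {0..T} \<Longrightarrow> is_set_cond_exp M (F u) p (\<Psi> T) (Y u) \<and> (AE x in M. Y u x = \<Psi> u x)"
  proof -
    have "\<forall>u\<in>{0..T}. \<exists>Y. is_set_cond_exp M (F u) p (\<Psi> T) Y \<and> (AE x in M. Y x = \<Psi> u x)"
      using mart unfolding set_martingale_def F_def by auto
    then obtain Y0 where "\<forall>u\<in>{0..T}. is_set_cond_exp M (F u) p (\<Psi> T) (Y0 u) \<and> (AE x in M. Y0 u x = \<Psi> u x)"
      by (rule bchoice[THEN exE]) blast
    then show ?thesis using that by blast
  qed
  have SpY: "Sp M (F u) p (Y u) = Sp M (F u) p (\<Psi> u)" if "u \<in> {0..T}" for u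
  proof -
    have ae: "AE x in M. Y u x = \<Psi> u x" using Y[OF that] by auto
    have "(AE x in M. f x \<in> Y u x) \<longleftrightarrow> (AE x in M. f x \<in> \<Psi> u x)" for f
    proof
      assume "AE x in M. f x \<in> Y u x"
      with ae show "AE x in M. f x \<in> \<Psi> u x" by eventually_elim simp
    next
      assume "AE x in M. f x \<in> \<Psi> u x"
      with ae show "AE x in M. f x \<in> Y u x" by eventually_elim simp
    qed
    then show ?thesis unfolding Sp_def by auto
  qed
  let ?A = "\<lambda>u. {h. \<exists>g\<in>Sp M M p (\<Psi> T). is_cond_exp M (F u) g h}"
  have SpA: "Sp M (F u) p (\<Psi> u) = Lp_closure M (F u) p (?A u)" if "u \<in> {0..T}" for u
    using Y[OF that] SpY[OF that] unfolding is_set_cond_exp_def by auto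
  let ?D0 = "{\<psi> t | \<psi>. \<psi> \<in> Msel M F T p \<Psi>}"
  have key: "h \<in> ?D0" if g: "g \<in> Sp M M p (\<Psi> T)" and h: "is_cond_exp M (F t) g h" for g h
  proof -
    have gm: "g \<in> borel_measurable M" and gp: "integrable M (\<lambda>x. norm (g x) powr p)"
      using g unfolding Sp_def Lp_space_def by auto
    have ig: "integrable M g" by (rule pce.Lp_integrable[OF pceF[OF t] p1 gm gp])
    define \<psi> where "\<psi> u = (if u = t then h else SOME c. is_cond_exp M (F u) g c)" for u
    have ce: "is_cond_exp M (F u) g (\<psi> u)" if u: "u \<in> {0..T}" for u
    proof (cases "u = t")
      case True then show ?thesis using h unfolding \<psi>_def by simp
    next
      case False
      have "\<exists>c. is_cond_exp M (F u) g c" using pce.ce_exists[OF pceF[OF u] ig] by blast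
      from someI_ex[OF this] show ?thesis using False unfolding \<psi>_def by simp
    qed
    have inSp: "\<psi> u \<in> Sp M (F u) p (\<Psi> u)" if u: "u \<in> {0..T}" for u
    proof -
      have L: "\<psi> u \<in> Lp_space M (F u) p"
        using ce[OF u] pce.ce_Lp[OF pceF[OF u] p1 gm gp ce[OF u]] unfolding Lp_space_def is_cond_exp_def by auto
      have "\<psi> u \<in> Lp_closure M (F u) p (?A u)"
        unfolding Lp_closure_def
      proof (intro CollectI conjI L allI impI)
        fix e :: real assume e: "e > 0"
        have "\<psi> u \<in> ?A u" using g ce[OF u] by auto
        moreover have "Lp_norm M p (\<lambda>x. \<psi> u x - \<psi> u x) < e" using Lp_norm_self[OF p0, of M "\<psi> u"] e by simp
        ultimately show "\<exists>g\<in>?A u. Lp_norm M p (\<lambda>x. \<psi> u x - g x) < e" by (intro bexI[where x="\<psi> u"])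
      qed
      then show ?thesis using SpA[OF u] by simp
    qed
    have mg: "martingale_E M F T \<psi>"
      unfolding martingale_E_def
    proof (intro conjI ballI allI impI)
      fix u assume u: "u \<in> {0..T}"
      show "\<psi> u \<in> borel_measurable (F u)" "integrable M (\<psi> u)" using ce[OF u] unfolding is_cond_exp_def by auto
    next
      fix s u A assume su: "0 \<le> s" "s \<le> u" "u \<le> T" and A: "A \<in> sets (F s)"
      have "A \<in> sets (F u)" using Fmono[OF su(2)] A by auto
      then have "set_lebesgue_integral M A (\<psi> u) = set_lebesgue_integral M A g"
        using ce[of u] su unfolding is_cond_exp_def by auto
      also have "\<dots> = set_lebesgue_integral M A (\<psi> s)"
        using ce[of s] su A unfolding is_cond_exp_def by auto
      finally show "set_lebesgue_integral M A (\<psi> u) = set_lebesgue_integral M A (\<psi> s)" .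
    qed
    have "\<psi> \<in> Msel M F T p \<Psi>" unfolding Msel_def using mg inSp by auto
    moreover have "h = \<psi> t" unfolding \<psi>_def by simp
    ultimately show ?thesis by (intro CollectI exI[of _ \<psi>] conjI)
  qed
  have D0sub: "?D0 \<subseteq> Sp M (F t) p (\<Psi> t)" using t unfolding Msel_def by auto
  have "dec_closure M (F t) p ?D0 = Sp M (F t) p (\<Psi> t)"
  proof
    show "dec_closure M (F t) p ?D0 \<subseteq> Sp M (F t) p (\<Psi> t)"
      unfolding dec_closure_def
    proof (rule Inter_lower, intro CollectI conjI D0sub)
      show "Sp M (F t) p (\<Psi> t) \<subseteq> Lp_space M (F t) p" unfolding Sp_def by auto
      show "Lp_closure M (F t) p (Sp M (F t) p (\<Psi> t)) \<subseteq> Sp M (F t) p (\<Psi> t)"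
        by (rule Sp_closed[OF subF[OF t] p1 closedPsi[OF t]])
      show "decomposable M (F t) (Sp M (F t) p (\<Psi> t))"
        by (rule Sp_decomp[OF subF[OF t] p0])
    qed
  next
    show "Sp M (F t) p (\<Psi> t) \<subseteq> dec_closure M (F t) p ?D0"
      unfolding dec_closure_def
    proof (rule Inter_greatest)
      fix D assume "D \<in> {D. ?D0 \<subseteq> D \<and> D \<subseteq> Lp_space M (F t) p \<and> Lp_closure M (F t) p D \<subseteq> D \<and> decomposable M (F t) D}"
      then have D0D: "?D0 \<subseteq> D" and Dcl: "Lp_closure M (F t) p D \<subseteq> D" by auto
      show "Sp M (F t) p (\<Psi> t) \<subseteq> D"
      proof
        fix f assume "f \<in> Sp M (F t) p (\<Psi> t)"
        then have f: "f \<in> Lp_closure M (F t) p (?A t)" using SpA[OF t] by simp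
        have "f \<in> Lp_closure M (F t) p D"
          unfolding Lp_closure_def
        proof (intro CollectI conjI allI impI)
          show "f \<in> Lp_space M (F t) p" using f unfolding Lp_closure_def by auto
          fix e :: real assume e: "e > 0"
          then obtain h where hA: "h \<in> ?A t" and he: "Lp_norm M p (\<lambda>x. f x - h x) < e"
            using f unfolding Lp_closure_def by blast
          then obtain g where "g \<in> Sp M M p (\<Psi> T)" "is_cond_exp M (F t) g h" by blast
          then have "h \<in> ?D0" by (rule key)
          then have "h \<in> D" using D0D by (rule rev_subsetD)
          then show "\<exists>g\<in>D. Lp_norm M p (\<lambda>x. f x - g x) < e" using he by blast
        qed
        then show "f \<in> D" using Dcl by blast
      qed
    qed
  qed
  then show "dec_closure M (nat_filtration M W t) p
             {\<psi> t | \<psi>. \<psi> \<in> Msel M (nat_filtration M W) T p \<Psi>}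
           = Sp M (nat_filtration M W t) p (\<Psi> t)" unfolding F_def .
qed

end
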